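(* For the RHA process and every $j\ge1$, $$\inf_{n\in\mathbb N}2^{-n}H(X^n_j)=h,\qquad\text{where } h:=\inf_{l\in\mathbb N}2^{-l}\log k_l=\lim_{l\to\infty}2^{-l}\log k_l.$$
   Context: Random hierarchical association (RHA) process. Fix positive integers $(k_n)_{n\ge0}$ (perplexities) with $k_{n-1}\le k_n\le k_{n-1}^2$ for all $n\ge1$. On a probability space $(\Omega,\mathcal J,P)$ let, for each $n\ge1$, $(L_{nj},R_{nj})_{j=1}^{k_n}$ be the lexicographically sorted enumeration of a uniformly random $k_n$-element subset of $\{1,\dots,k_{n-1}\}^2$ (each of the $\binom{k_{n-1}^2}{k_n}$ subsets equally likely), independently over $n$. Let $(C_n)_{n\ge0}$ be independent, independent of all $(L_{nj},R_{nj})$, with $C_n$ uniform on $\{1,\dots,k_n\}$. Define strings $Y^0_j=j$ (length 1) for $1\le j\le k_0$ and $Y^n_j=Y^{n-1}_{L_{nj}}Y^{n-1}_{R_{nj}}$ (concatenation). The RHA process is $\mathcal X=Y^0_{C_0}Y^1_{C_1}Y^2_{C_2}\cdots=X_1X_2X_3\cdots$, $X_{k:l}=X_k\cdots X_l$; for $n\ge0$, $j\ge1$, $X^n_j=X_{j2^n:(j+1)2^n-1}$. $H(X)=\mathbb E_P[-\log P(X)]$ with natural logarithm. The quantity $h$ is called the combinatorial entropy rate. *)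

theory Defs
  imports "HOL-Probability.Probability"
begin

definition lex_less :: "nat \<times> nat \<Rightarrow> nat \<times> nat \<Rightarrow> bool" where
  "lex_less p q \<longleftrightarrow> fst p < fst q \<or> (fst p = fst q \<and> snd p < snd q)"

text \<open>Lexicographically sorted enumeration of a finite set of pairs (as a list,
  so that the j-th element, j \<ge> 1, is at list index j - 1).\<close>
definition lex_enum :: "(nat \<times> nat) set \<Rightarrow> (nat \<times> nat) list" where
  "lex_enum A = (THE xs. sorted_wrt lex_less xs \<and> set xs = A)"

definition perplexities :: "(nat \<Rightarrow> nat) \<Rightarrow> bool" where
  "perplexities k \<longleftrightarrow> (\<forall>n. k n > 0) \<and> (\<forall>n\<ge>1. k (n-1) \<le> k n \<and> k n \<le> (k (n-1))^2)"

definition subsets_RHA :: "(nat \<Rightarrow> nat) \<Rightarrow> nat \<Rightarrow> (nat \<times> nat) set set" where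
  "subsets_RHA k n = {A. A \<subseteq> {1..k (n-1)} \<times> {1..k (n-1)} \<and> card A = k n}"

text \<open>Strings Y^n_i, given the realised pair sets S n (n \<ge> 1):
  Y^0_i = [i], Y^n_i = Y^{n-1}_{L_{ni}} Y^{n-1}_{R_{ni}}.\<close>
primrec Ystr :: "(nat \<Rightarrow> (nat \<times> nat) set) \<Rightarrow> nat \<Rightarrow> nat \<Rightarrow> nat list" where
  "Ystr S 0 i = [i]"
| "Ystr S (Suc n) i =
     Ystr S n (fst (lex_enum (S (Suc n)) ! (i - 1))) @ Ystr S n (snd (lex_enum (S (Suc n)) ! (i - 1)))"

definition RHA_prefix :: "(nat \<Rightarrow> (nat \<times> nat) set) \<Rightarrow> (nat \<Rightarrow> nat) \<Rightarrow> nat \<Rightarrow> nat list" where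
  "RHA_prefix S c m = concat (map (\<lambda>i. Ystr S i (c i)) [0..<m])"

text \<open>The symbol X_t (t \<ge> 1) of the infinite concatenation; the prefix of
  Suc t blocks has length 2^(Suc t) - 1 \<ge> t.\<close>
definition RHA_X :: "(nat \<Rightarrow> (nat \<times> nat) set) \<Rightarrow> (nat \<Rightarrow> nat) \<Rightarrow> nat \<Rightarrow> nat" where
  "RHA_X S c t = RHA_prefix S c (Suc t) ! (t - 1)"

definition RHA_block :: "(nat \<Rightarrow> (nat \<times> nat) set) \<Rightarrow> (nat \<Rightarrow> nat) \<Rightarrow> nat \<Rightarrow> nat \<Rightarrow> nat list" where
  "RHA_block S c n j = map (RHA_X S c) [j * 2^n ..< (j+1) * 2^n]"

definition entropy_nat :: "'a measure \<Rightarrow> ('a \<Rightarrow> 'b) \<Rightarrow> real" where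
  "entropy_nat M X = (\<integral>\<omega>. - ln (measure M {\<omega>' \<in> space M. X \<omega>' = X \<omega>}) \<partial>M)"

text \<open>The random data of the RHA process on a probability space M:
  S n (n \<ge> 1) is the random set {(L_{nj},R_{nj})}, uniform over the k_n-element subsets
  of {1..k_{n-1}}^2; C n is uniform on {1..k_n}; all of them are mutually independent.\<close>
definition RHA_model :: "'a measure \<Rightarrow> (nat \<Rightarrow> nat) \<Rightarrow> (nat \<Rightarrow> 'a \<Rightarrow> (nat \<times> nat) set) \<Rightarrow> (nat \<Rightarrow> 'a \<Rightarrow> nat) \<Rightarrow> bool" where
  "RHA_model M k S C \<longleftrightarrow>
     prob_space M \<and>
     (\<forall>n\<ge>1. S n \<in> measurable M (count_space UNIV) \<and>
             (\<forall>\<omega>\<in>space M. S n \<omega> \<in> subsets_RHA k n) \<and>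
             (\<forall>A\<in>subsets_RHA k n. measure M {\<omega> \<in> space M. S n \<omega> = A} = 1 / real (card (subsets_RHA k n)))) \<and>
     (\<forall>n. C n \<in> measurable M (count_space UNIV) \<and>
          (\<forall>\<omega>\<in>space M. C n \<omega> \<in> {1..k n}) \<and>
          (\<forall>c\<in>{1..k n}. measure M {\<omega> \<in> space M. C n \<omega> = c} = 1 / real (k n))) \<and>
     prob_space.indep_vars M (\<lambda>_. count_space UNIV)
        (\<lambda>i \<omega>. case i of Inl n \<Rightarrow> Inl (S n \<omega>) | Inr n \<Rightarrow> Inr (C n \<omega>))
        (Inl ` {1..} \<union> range Inr)"

end

theory Submission
  imports Defs
begin


definition pick :: "bool \<Rightarrow> nat \<times> nat \<Rightarrow> nat" where
  "pick b x = (if b then fst x else snd x)"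

fun desc :: "(nat \<Rightarrow> (nat \<times> nat) set) \<Rightarrow> nat \<Rightarrow> nat \<Rightarrow> nat \<Rightarrow> nat \<Rightarrow> nat" where
  "desc s n 0 i r = i"
| "desc s n (Suc q) i r = desc s n q (pick (r < 2^q) (lex_enum (s (Suc (n+q))) ! (i-1))) (r mod 2^q)"

lemma length_Ystr[simp]: "length (Ystr s n i) = 2^n"
  by (induction n arbitrary: i) auto

lemma desc_block:
  "r < 2^q \<Longrightarrow> take (2^n) (drop (r*2^n) (Ystr s (n+q) i)) = Ystr s n (desc s n q i r)"
proof (induction q arbitrary: i r)
  case 0
  then show ?case by simp
next
  case (Suc q)
  define A where "A = Ystr s (n+q) (fst (lex_enum (s (Suc (n+q))) ! (i-1)))"
  define B where "B = Ystr s (n+q) (snd (lex_enum (s (Suc (n+q))) ! (i-1)))"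
  have YAB: "Ystr s (n + Suc q) i = A @ B" by (simp add: A_def B_def)
  have lA: "length A = 2^(n+q)" by (simp add: A_def)
  show ?case
  proof (cases "r < 2^q")
    case True
    have "(r+1)*2^n \<le> 2^q * 2^n"
      using True by (intro mult_right_mono) auto
    then have "r*2^n + 2^n \<le> 2^q * 2^n" by (simp add: algebra_simps)
    then have le: "r*2^n + 2^n \<le> length A" by (simp add: lA power_add mult.commute)
    have "take (2^n) (drop (r*2^n) (A @ B)) = take (2^n) (drop (r*2^n) A)"
      using le by (simp add: take_append)
    also have "\<dots> = Ystr s n (desc s n q (fst (lex_enum (s (Suc (n+q))) ! (i-1))) r)"
      unfolding A_def using Suc.IH[OF True] by simp
    finally have ch: "take (2^n) (drop (r*2^n) (A @ B)) = Ystr s n (desc s n q (fst (lex_enum (s (Suc (n+q))) ! (i-1))) r)" .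
    have de: "desc s n (Suc q) i r = desc s n q (fst (lex_enum (s (Suc (n+q))) ! (i-1))) r"
      using True by (simp add: pick_def)
    show ?thesis unfolding YAB de by (rule ch)
  next
    case False
    have r': "r - 2^q < 2^q" using Suc.prems False by simp
    have "r*2^n = length A + (r - 2^q)*2^n"
      using False by (simp add: lA power_add diff_mult_distrib algebra_simps)
    then have "drop (r*2^n) (A @ B) = drop ((r - 2^q)*2^n) B"
      by simp
    then have ch: "take (2^n) (drop (r*2^n) (A @ B)) = Ystr s n (desc s n q (snd (lex_enum (s (Suc (n+q))) ! (i-1))) (r - 2^q))"
      unfolding B_def using Suc.IH[OF r'] by simp
    have md: "r mod 2^q = r - 2^q" using False Suc.prems
      by (simp add: le_mod_geq)
    have de: "desc s n (Suc q) i r = desc s n q (snd (lex_enum (s (Suc (n+q))) ! (i-1))) (r - 2^q)"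
      using False md by (simp add: pick_def)
    show ?thesis unfolding YAB de by (rule ch)
  qed
qed

lemma RHA_prefix_Suc: "RHA_prefix s c (Suc m) = RHA_prefix s c m @ Ystr s m (c m)"
  by (simp add: RHA_prefix_def)

lemma length_RHA_prefix: "length (RHA_prefix s c m) = 2^m - 1"
proof (induction m)
  case 0 then show ?case by (simp add: RHA_prefix_def)
next
  case (Suc m)
  have "(1::nat) \<le> 2^m" by simp
  then show ?case using Suc by (simp add: RHA_prefix_Suc)
qed

lemma RHA_prefix_add: "RHA_prefix s c (m + d) = RHA_prefix s c m @ concat (map (\<lambda>i. Ystr s i (c i)) [m..<m+d])"
  by (induction d) (auto simp: RHA_prefix_Suc)

lemma RHA_X_eq:
  assumes "2^m \<le> t" "t < 2^(Suc m)"
  shows "RHA_X s c t = Ystr s m (c m) ! (t - 2^m)"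
proof -
  have mt: "m < t" using assms(1) less_le_trans[OF less_exp] by blast
  obtain d where d: "Suc t = Suc m + d" using mt by (intro that[of "t - m"]) simp
  have "RHA_prefix s c (Suc t) = RHA_prefix s c (Suc m) @ concat (map (\<lambda>i. Ystr s i (c i)) [Suc m..<Suc m+d])"
    unfolding d by (rule RHA_prefix_add)
  then have "RHA_prefix s c (Suc t) = (RHA_prefix s c m @ Ystr s m (c m)) @ concat (map (\<lambda>i. Ystr s i (c i)) [Suc m..<Suc m+d])"
    by (simp only: RHA_prefix_Suc)
  moreover have "t - 1 < length (RHA_prefix s c m @ Ystr s m (c m))"
    using assms by (simp add: length_RHA_prefix)
  ultimately have "RHA_X s c t = (RHA_prefix s c m @ Ystr s m (c m)) ! (t - 1)"
    unfolding RHA_X_def by (simp only: nth_append_left)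
  also have "\<dots> = Ystr s m (c m) ! (t - 1 - (2^m - 1))"
  proof -
    have "length (RHA_prefix s c m) \<le> t - 1" using assms(1) by (simp add: length_RHA_prefix)
    then show ?thesis by (simp only: nth_append_right length_RHA_prefix)
  qed
  also have "t - 1 - (2^m - 1) = t - 2^m" using assms(1)
  proof -
    have "(1::nat) \<le> 2^m" by simp
    then show ?thesis using assms(1) by linarith
  qed
  finally show ?thesis .
qed

lemma RHA_block_eq:
  assumes "2^p \<le> j" "j < 2^(Suc p)"
  shows "RHA_block s c n j = Ystr s n (desc s n p (c (n+p)) (j - 2^p))"
proof -
  have r: "j - 2^p < 2^p" using assms by simp
  have R: "Ystr s n (desc s n p (c (n+p)) (j - 2^p)) = take (2^n) (drop ((j - 2^p)*2^n) (Ystr s (n+p) (c (n+p))))"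
    using desc_block[OF r] by simp
  show ?thesis
  proof (rule nth_equalityI)
    show "length (RHA_block s c n j) = length (Ystr s n (desc s n p (c (n+p)) (j - 2^p)))"
      by (simp add: RHA_block_def algebra_simps)
    fix u assume u: "u < length (RHA_block s c n j)"
    then have u': "u < 2^n" by (simp add: RHA_block_def algebra_simps)
    have "2^p*2^n \<le> j*2^n" using assms(1) by (rule mult_right_mono) simp
    moreover have "(2::nat)^(n+p) = 2^p*2^n" by (simp add: power_add)
    ultimately have t1: "2^(n+p) \<le> j*2^n + u" by linarith
    have "(j+1)*2^n \<le> 2^(Suc p) * 2^n" using assms(2) by (intro mult_right_mono) auto
    then have t2: "j*2^n + u < 2^(Suc (n+p))" using u' by (simp add: power_add algebra_simps)
    have "RHA_block s c n j ! u = RHA_X s c (j*2^n + u)"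
      using u' by (simp add: RHA_block_def algebra_simps)
    also have "\<dots> = Ystr s (n+p) (c (n+p)) ! (j*2^n + u - 2^(n+p))"
      using RHA_X_eq[OF t1 t2] .
    also have "j*2^n + u - 2^(n+p) = (j - 2^p)*2^n + u"
      using assms(1) by (simp add: power_add diff_mult_distrib algebra_simps)
    also have "Ystr s (n+p) (c (n+p)) ! ((j - 2^p)*2^n + u) = Ystr s n (desc s n p (c (n+p)) (j - 2^p)) ! u"
    proof -
      have "(j - 2^p)*2^n + 2^n \<le> 2^(n+p)"
      proof -
        have "(j - 2^p + 1) * 2^n \<le> 2^p * 2^n" using r by (intro mult_right_mono) auto
        then show ?thesis by (simp add: power_add algebra_simps)
      qed
      then show ?thesis using u' by (simp add: R)
    qed
    finally show "RHA_block s c n j ! u = Ystr s n (desc s n p (c (n+p)) (j - 2^p)) ! u" .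
  qed
qed



lemma sorted_wrt_unique:
  assumes asym: "\<And>x y. R x y \<Longrightarrow> \<not> R y x"
  shows "sorted_wrt R xs \<Longrightarrow> sorted_wrt R ys \<Longrightarrow> set xs = set ys \<Longrightarrow> xs = ys"
proof (induction xs arbitrary: ys)
  case Nil then show ?case by simp
next
  case (Cons x xs)
  then obtain y ys' where ys: "ys = y # ys'" by (cases ys) auto
  have xy: "x = y"
  proof (rule ccontr)
    assume ne: "x \<noteq> y"
    have "x \<in> set ys'" using Cons.prems ne ys by (metis insert_iff list.simps(15))
    then have "R y x" using Cons.prems(2) ys by simp
    moreover have "y \<in> set xs" using Cons.prems ne ys by (metis insert_iff list.simps(15))
    then have "R x y" using Cons.prems(1) by simp
    ultimately show False using asym by blast
  qed
  have nx: "x \<notin> set xs" using Cons.prems(1) asym by auto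
  have ny: "y \<notin> set ys'" using Cons.prems(2) asym ys by auto
  have "set xs = set ys'" using Cons.prems(3) ys xy nx ny by auto
  then show ?case using Cons ys xy by auto
qed

lemma lex_less_asym: "lex_less x y \<Longrightarrow> \<not> lex_less y x"
  by (auto simp: lex_less_def)

lemma lex_enum_exists: "finite A \<Longrightarrow> \<exists>xs. sorted_wrt lex_less xs \<and> set xs = A"
proof (induction "card A" arbitrary: A)
  case 0
  then show ?case by (intro exI[of _ "[]"]) auto
next
  case (Suc c)
  then have ne: "A \<noteq> {}" by auto
  define a0 where "a0 = Min (fst ` A)"
  have a0: "a0 \<in> fst ` A" unfolding a0_def using Suc.prems ne by simp
  define b0 where "b0 = Min (snd ` {x\<in>A. fst x = a0})"
  have fin2: "finite (snd ` {x\<in>A. fst x = a0})" using Suc.prems by simp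
  have ne2: "snd ` {x\<in>A. fst x = a0} \<noteq> {}" using a0 by force
  have mA: "(a0, b0) \<in> A" using Min_in[OF fin2 ne2] unfolding b0_def by auto
  have mmin: "lex_less (a0, b0) y" if "y \<in> A" "y \<noteq> (a0, b0)" for y
  proof -
    have "a0 \<le> fst y" unfolding a0_def using Suc.prems that by simp
    moreover have "fst y = a0 \<Longrightarrow> b0 \<le> snd y" unfolding b0_def using fin2 that by auto
    ultimately show ?thesis using that unfolding lex_less_def by (cases y) auto
  qed
  have "c = card (A - {(a0, b0)})" using Suc.hyps(2) mA Suc.prems by simp
  then obtain xs where xs: "sorted_wrt lex_less xs" "set xs = A - {(a0, b0)}"
    using Suc.hyps(1) Suc.prems by blast
  show ?case
    by (intro exI[of _ "(a0,b0) # xs"]) (use xs mA mmin in auto)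
qed

lemma lex_enum: "finite A \<Longrightarrow> sorted_wrt lex_less (lex_enum A) \<and> set (lex_enum A) = A"
  unfolding lex_enum_def
proof (rule theI')
  assume "finite A"
  then obtain xs where "sorted_wrt lex_less xs \<and> set xs = A" using lex_enum_exists by blast
  then show "\<exists>!xs. sorted_wrt lex_less xs \<and> set xs = A"
    using sorted_wrt_unique[where R=lex_less, OF lex_less_asym] by blast
qed

lemma sorted_wrt_asym_distinct:
  assumes "\<And>x y. R x y \<Longrightarrow> \<not> R y x"
  shows "sorted_wrt R xs \<Longrightarrow> distinct xs"
  by (induction xs) (use assms in auto)

lemma sorted_lex_distinct: "sorted_wrt lex_less xs \<Longrightarrow> distinct xs"
proof (induction xs)
  case Nil then show ?case by simp
next
  case (Cons x xs)
  have "\<not> lex_less x x" by (simp add: lex_less_def)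
  then have "x \<notin> set xs" using Cons.prems by auto
  then show ?case using Cons by simp
qed

lemma lex_enum_distinct: "finite A \<Longrightarrow> distinct (lex_enum A)"
proof -
  assume "finite A"
  then have "sorted_wrt lex_less (lex_enum A)" using lex_enum by blast
  then show "distinct (lex_enum A)" by (rule sorted_lex_distinct)
qed

lemma lex_enum_set: "finite A \<Longrightarrow> set (lex_enum A) = A"
  using lex_enum by (simp only:)

lemma lex_enum_length: "finite A \<Longrightarrow> length (lex_enum A) = card A"
  using distinct_card[OF lex_enum_distinct] lex_enum_set by simp

lemma subsets_RHA_finite: "A \<in> subsets_RHA k t \<Longrightarrow> finite A"
proof -
  assume "A \<in> subsets_RHA k t"
  then have "A \<subseteq> {1..k (t-1)} \<times> {1..k (t-1)}" unfolding subsets_RHA_def by simp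
  then show "finite A" by (rule finite_subset) simp
qed

lemma lex_enum_nth:
  assumes "A \<in> subsets_RHA k t" "i \<in> {1..k t}"
  shows "lex_enum A ! (i-1) \<in> A" "fst (lex_enum A ! (i-1)) \<in> {1..k (t-1)}"
        "snd (lex_enum A ! (i-1)) \<in> {1..k (t-1)}"
proof -
  have f: "finite A" using assms(1) by (rule subsets_RHA_finite)
  have "length (lex_enum A) = k t" using lex_enum_length[OF f] assms(1) by (simp add: subsets_RHA_def)
  then have "i - 1 < length (lex_enum A)" using assms(2) by auto
  then show m: "lex_enum A ! (i-1) \<in> A" using lex_enum_set[OF f] nth_mem by blast
  have "A \<subseteq> {1..k (t-1)} \<times> {1..k (t-1)}" using assms(1) by (simp add: subsets_RHA_def)
  then have "lex_enum A ! (i-1) \<in> {1..k (t-1)} \<times> {1..k (t-1)}" using m by (rule subsetD)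
  then show "fst (lex_enum A ! (i-1)) \<in> {1..k (t-1)}" "snd (lex_enum A ! (i-1)) \<in> {1..k (t-1)}"
    by (simp_all only: mem_Times_iff)
qed

lemma pick_range:
  assumes "A \<in> subsets_RHA k t" "i \<in> {1..k t}"
  shows "pick b (lex_enum A ! (i-1)) \<in> {1..k (t-1)}"
  using lex_enum_nth[OF assms] by (simp add: pick_def)

lemma desc_range:
  assumes "\<forall>u\<in>{Suc n..n+q}. s u \<in> subsets_RHA k u" "i \<in> {1..k (n+q)}"
  shows "desc s n q i r \<in> {1..k n}"
  using assms
proof (induction q arbitrary: i r)
  case 0 then show ?case by simp
next
  case (Suc q)
  have "s (Suc (n+q)) \<in> subsets_RHA k (Suc (n+q))" using Suc.prems(1) by auto
  then have "pick (r < 2^q) (lex_enum (s (Suc (n+q))) ! (i-1)) \<in> {1..k (n+q)}"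
    using pick_range[of "s (Suc (n+q))" k "Suc (n+q)" i] Suc.prems(2) by simp
  moreover have h: "\<forall>u\<in>{Suc n..n+q}. s u \<in> subsets_RHA k u" using Suc.prems(1) by auto
  ultimately have "desc s n q (pick (r < 2^q) (lex_enum (s (Suc (n+q))) ! (i-1))) (r mod 2^q) \<in> {1..k n}"
    using Suc.IH by blast
  then show ?case by simp
qed

lemma Ystr_local: "\<forall>u\<in>{1..n}. s u = s' u \<Longrightarrow> Ystr s n i = Ystr s' n i"
proof (induction n arbitrary: i)
  case 0 then show ?case by simp
next
  case (Suc n)
  have h: "\<forall>u\<in>{1..n}. s u = s' u" using Suc.prems by simp
  have e: "s (Suc n) = s' (Suc n)" using Suc.prems by simp
  show ?case by (simp only: Ystr.simps e Suc.IH[OF h])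
qed

lemma desc_local: "\<forall>u\<in>{Suc n..n+q}. s u = s' u \<Longrightarrow> desc s n q i r = desc s' n q i r"
proof (induction q arbitrary: i r)
  case 0 then show ?case by simp
next
  case (Suc q)
  have h: "\<forall>u\<in>{Suc n..n+q}. s u = s' u" using Suc.prems by simp
  have e: "s (Suc (n+q)) = s' (Suc (n+q))" using Suc.prems by simp
  show ?case by (simp only: desc.simps e Suc.IH[OF h])
qed

lemma Ystr_inj:
  assumes "\<forall>u\<in>{1..n}. s u \<in> subsets_RHA k u"
  shows "inj_on (Ystr s n) {1..k n}"
  using assms
proof (induction n)
  case 0 then show ?case by (simp add: inj_on_def)
next
  case (Suc n)
  define A where "A = s (Suc n)"
  have A: "A \<in> subsets_RHA k (Suc n)" using Suc.prems unfolding A_def by auto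
  have "\<forall>u\<in>{1..n}. s u \<in> subsets_RHA k u" using Suc.prems by auto
  then have IH: "inj_on (Ystr s n) {1..k n}" by (rule Suc.IH)
  show ?case
  proof (rule inj_onI)
    fix i i' assume i: "i \<in> {1..k (Suc n)}" and i': "i' \<in> {1..k (Suc n)}"
      and eq: "Ystr s (Suc n) i = Ystr s (Suc n) i'"
    define p where "p = lex_enum A ! (i-1)"
    define p' where "p' = lex_enum A ! (i'-1)"
    have r1: "fst p \<in> {1..k n}" "snd p \<in> {1..k n}"
      using lex_enum_nth(2,3)[OF A i] unfolding p_def by auto
    have r2: "fst p' \<in> {1..k n}" "snd p' \<in> {1..k n}"
      using lex_enum_nth(2,3)[OF A i'] unfolding p'_def by auto
    have e2: "Ystr s n (fst p) @ Ystr s n (snd p) = Ystr s n (fst p') @ Ystr s n (snd p')"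
      using eq by (simp only: Ystr.simps A_def p_def p'_def)
    have "Ystr s n (fst p) = Ystr s n (fst p') \<and> Ystr s n (snd p) = Ystr s n (snd p')"
      using e2 by (rule append_eq_append_conv[THEN iffD1, rotated]) simp
    then have "fst p = fst p'" "snd p = snd p'" using inj_onD[OF IH] r1 r2 by blast+
    then have "lex_enum A ! (i-1) = lex_enum A ! (i'-1)" unfolding p_def p'_def by (rule prod_eqI)
    moreover have f: "finite A" using A by (rule subsets_RHA_finite)
    have len: "length (lex_enum A) = k (Suc n)" using lex_enum_length[OF f] A by (simp add: subsets_RHA_def)
    have l1: "i - 1 < length (lex_enum A)" "i' - 1 < length (lex_enum A)" using i i' len by auto
    ultimately have "i - 1 = i' - 1"
      using nth_eq_iff_index_eq[OF lex_enum_distinct[OF f] l1] by blast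
    moreover have "1 \<le> i" "1 \<le> i'" using i i' by auto
    ultimately show "i = i'" by linarith
  qed
qed

lemma concat_chunks: "concat (map (\<lambda>r. take b (drop (r*b) xs)) [0..<a]) = take (a*b) xs"
proof (induction a)
  case 0 then show ?case by simp
next
  case (Suc a)
  have "take (Suc a * b) xs = take (a*b) xs @ take b (drop (a*b) xs)"
    by (metis add.commute mult_Suc take_add)
  then show ?case using Suc by simp
qed

lemma Ystr_chunks:
  assumes "l \<le> n"
  shows "Ystr s n i = concat (map (\<lambda>r. Ystr s l (desc s l (n-l) i r)) [0..<2^(n-l)])"
proof -
  have nn: "n = l + (n - l)" using assms by simp
  have "concat (map (\<lambda>r. Ystr s l (desc s l (n-l) i r)) [0..<2^(n-l)])
      = concat (map (\<lambda>r. take (2^l) (drop (r*2^l) (Ystr s (l+(n-l)) i))) [0..<2^(n-l)])"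
    by (intro arg_cong[where f=concat] map_cong) (auto simp: desc_block)
  also have "\<dots> = take (2^(n-l)*2^l) (Ystr s (l+(n-l)) i)" by (rule concat_chunks)
  also have "\<dots> = Ystr s n i" using nn by (simp add: power_add[symmetric] add.commute)
  finally show ?thesis by simp
qed



lemma sum_PiE_insert:
  assumes "x \<notin> I"
  shows "sum f (PiE (insert x I) T) = (\<Sum>y\<in>T x. \<Sum>g\<in>PiE I T. f (g(x:=y)))"
  unfolding PiE_insert_eq
  by (subst sum.reindex[OF inj_combinator[OF assms]]) (simp add: sum.cartesian_product prod.case_distrib)

lemma perp_pos: "perplexities k \<Longrightarrow> k t > 0"
  by (simp add: perplexities_def)

lemma perp_le: "perplexities k \<Longrightarrow> t \<ge> 1 \<Longrightarrow> k t \<le> k (t-1)^2"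
  by (simp add: perplexities_def)

lemma card_subsets_RHA:
  "card (subsets_RHA k t) = (k (t-1) * k (t-1)) choose k t"
proof -
  have "card (subsets_RHA k t) = card ({1..k (t-1)} \<times> {1..k (t-1)}) choose k t"
    unfolding subsets_RHA_def by (rule n_subsets) simp
  then show ?thesis by (simp add: card_cartesian_product)
qed

lemma subsets_RHA_fin: "finite (subsets_RHA k t)"
proof -
  have "subsets_RHA k t \<subseteq> Pow ({1..k (t-1)} \<times> {1..k (t-1)})" unfolding subsets_RHA_def by auto
  then show ?thesis by (rule finite_subset) simp
qed

lemma card_subsets_pos: "perplexities k \<Longrightarrow> t \<ge> 1 \<Longrightarrow> card (subsets_RHA k t) > 0"
  using perp_le[of k t] by (simp add: card_subsets_RHA power2_eq_square)

lemma card_containing: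
  assumes G: "G = {1..K} \<times> {1..K}" and x: "x \<in> G" and kt: "kt \<ge> 1"
  shows "card {A. A \<subseteq> G \<and> card A = kt \<and> x \<in> A} = (K*K - 1) choose (kt - 1)"
proof -
  have fG: "finite G" using G by simp
  have eq: "{A. A \<subseteq> G \<and> card A = kt \<and> x \<in> A} = insert x ` {B. B \<subseteq> G - {x} \<and> card B = kt - 1}"
  proof (intro equalityI subsetI)
    fix A assume "A \<in> {A. A \<subseteq> G \<and> card A = kt \<and> x \<in> A}"
    then have A: "A \<subseteq> G" "card A = kt" "x \<in> A" by auto
    have fA: "finite A" using A(1) fG finite_subset by blast
    have "A - {x} \<in> {B. B \<subseteq> G - {x} \<and> card B = kt - 1}" using A fA by auto
    moreover have "A = insert x (A - {x})" using A by auto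
    ultimately show "A \<in> insert x ` {B. B \<subseteq> G - {x} \<and> card B = kt - 1}" by blast
  next
    fix A assume "A \<in> insert x ` {B. B \<subseteq> G - {x} \<and> card B = kt - 1}"
    then obtain B where B: "B \<subseteq> G - {x}" "card B = kt - 1" "A = insert x B" by auto
    have fB: "finite B" using B(1) fG finite_subset by blast
    have "x \<notin> B" using B by auto
    then have "card A = kt" using B fB kt by simp
    then show "A \<in> {A. A \<subseteq> G \<and> card A = kt \<and> x \<in> A}" using B x by auto
  qed
  have inj: "inj_on (insert x) {B. B \<subseteq> G - {x} \<and> card B = kt - 1}"
    by (rule inj_onI) auto
  have "card {A. A \<subseteq> G \<and> card A = kt \<and> x \<in> A} = card {B. B \<subseteq> G - {x} \<and> card B = kt - 1}"
    unfolding eq by (rule card_image[OF inj])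
  also have "\<dots> = card (G - {x}) choose (kt - 1)" by (rule n_subsets) (use fG in simp)
  also have "card (G - {x}) = K*K - 1" using x fG G by (simp add: card_cartesian_product)
  finally show ?thesis .
qed

lemma bij_lex_enum:
  assumes "A \<in> subsets_RHA k t"
  shows "bij_betw (\<lambda>c. lex_enum A ! (c-1)) {1..k t} A"
proof -
  have f: "finite A" using assms by (rule subsets_RHA_finite)
  have len: "length (lex_enum A) = k t" using lex_enum_length[OF f] assms by (simp add: subsets_RHA_def)
  have b1: "bij_betw ((!) (lex_enum A)) {..<k t} A"
    by (rule bij_betw_nth) (use lex_enum_distinct[OF f] lex_enum_set[OF f] len in auto)
  have b2: "bij_betw (\<lambda>c. c - 1) {1..k t} {..<k t}"
    by (rule bij_betwI[where g="\<lambda>c. c + 1"]) auto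
  show ?thesis using bij_betw_trans[OF b2 b1] by (simp add: comp_def)
qed

lemma one_level:
  assumes pk: "perplexities k" and t: "t \<ge> 1"
  shows "(\<Sum>A\<in>subsets_RHA k t. \<Sum>c\<in>{1..k t}. of_bool (pick b (lex_enum A ! (c-1)) = i')) * k (t-1)
         \<le> k t * card (subsets_RHA k t)"
proof -
  define K where "K = k (t-1)"
  define G where "G = {1..K} \<times> {1..K}"
  define kt where "kt = k t"
  have kt1: "kt \<ge> 1" using perp_pos[OF pk] unfolding kt_def by (simp add: Suc_leI)
  have fG: "finite G" unfolding G_def by simp
  define Cb where "Cb = (K*K - 1) choose (kt - 1)"
  have sub_eq: "subsets_RHA k t = {A. A \<subseteq> G \<and> card A = kt}"
    unfolding subsets_RHA_def G_def K_def kt_def by simp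
  have step1: "(\<Sum>c\<in>{1..k t}. of_bool (pick b (lex_enum A ! (c-1)) = i')) = (\<Sum>x\<in>A. of_bool (pick b x = i') :: nat)"
    if "A \<in> subsets_RHA k t" for A
    by (rule sum.reindex_bij_betw[OF bij_lex_enum[OF that], of "\<lambda>x. of_bool (pick b x = i')"])
  have step2: "(\<Sum>x\<in>A. of_bool (pick b x = i') :: nat) = (\<Sum>x\<in>G. of_bool (x \<in> A) * of_bool (pick b x = i'))"
    if "A \<in> subsets_RHA k t" for A
  proof -
    have "A \<subseteq> G" using that sub_eq by auto
    then have "G \<inter> A = A" by blast
    then have "(\<Sum>x\<in>A. of_bool (pick b x = i') :: nat) = (\<Sum>x\<in>G. if x \<in> A then of_bool (pick b x = i') else 0)"
      using sum.inter_restrict[OF fG, of "\<lambda>x. of_bool (pick b x = i') :: nat" A] by simp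
    also have "\<dots> = (\<Sum>x\<in>G. of_bool (x \<in> A) * of_bool (pick b x = i'))"
      by (rule sum.cong) auto
    finally show ?thesis .
  qed
  have "(\<Sum>A\<in>subsets_RHA k t. \<Sum>c\<in>{1..k t}. of_bool (pick b (lex_enum A ! (c-1)) = i'))
      = (\<Sum>A\<in>subsets_RHA k t. \<Sum>x\<in>G. of_bool (x \<in> A) * of_bool (pick b x = i') :: nat)"
    using step1 step2 by simp
  also have "\<dots> = (\<Sum>x\<in>G. \<Sum>A\<in>subsets_RHA k t. of_bool (x \<in> A) * of_bool (pick b x = i'))"
    by (rule sum.swap)
  also have "\<dots> = (\<Sum>x\<in>G. of_bool (pick b x = i') * card {A. A \<subseteq> G \<and> card A = kt \<and> x \<in> A})"
  proof (rule sum.cong[OF refl])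
    fix x assume "x \<in> G"
    have "(\<Sum>A\<in>subsets_RHA k t. of_bool (x \<in> A) * of_bool (pick b x = i') :: nat)
        = of_bool (pick b x = i') * (\<Sum>A\<in>subsets_RHA k t. of_bool (x \<in> A))"
      by (simp add: sum_distrib_left mult.commute)
    also have "(\<Sum>A\<in>subsets_RHA k t. of_bool (x \<in> A) :: nat) = card {A \<in> subsets_RHA k t. x \<in> A}"
      using subsets_RHA_fin[of k t] by (simp add: sum_of_bool_eq Int_def)
    also have "{A \<in> subsets_RHA k t. x \<in> A} = {A. A \<subseteq> G \<and> card A = kt \<and> x \<in> A}"
      using sub_eq by auto
    finally show "(\<Sum>A\<in>subsets_RHA k t. of_bool (x \<in> A) * of_bool (pick b x = i') :: nat)
        = of_bool (pick b x = i') * card {A. A \<subseteq> G \<and> card A = kt \<and> x \<in> A}" .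
  qed
  also have "\<dots> = (\<Sum>x\<in>G. of_bool (pick b x = i') * Cb)"
    by (rule sum.cong[OF refl]) (simp add: card_containing[OF G_def _ kt1] Cb_def)
  also have "\<dots> = card {x\<in>G. pick b x = i'} * Cb"
    using fG by (simp add: sum_distrib_right[symmetric] sum_of_bool_eq Int_def)
  finally have eq1: "(\<Sum>A\<in>subsets_RHA k t. \<Sum>c\<in>{1..k t}. of_bool (pick b (lex_enum A ! (c-1)) = i')) = card {x\<in>G. pick b x = i'} * Cb" .
  have cE: "card {x\<in>G. pick b x = i'} \<le> K"
  proof -
    have "{x\<in>G. pick b x = i'} \<subseteq> (\<lambda>y. if b then (i', y) else (y, i')) ` {1..K}"
      unfolding G_def pick_def by (auto split: if_splits)
    then have "card {x\<in>G. pick b x = i'} \<le> card ((\<lambda>y. if b then (i', y) else (y, i')) ` {1..K})"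
      by (rule card_mono[rotated]) simp
    also have "\<dots> \<le> card {1..K}" by (rule card_image_le) simp
    finally show ?thesis by simp
  qed
  have absorb: "K * K * Cb = kt * ((K*K) choose kt)"
    using binomial_absorption[of "kt - 1" "K*K"] kt1 unfolding Cb_def by simp
  have "card {x\<in>G. pick b x = i'} * Cb * K \<le> K * Cb * K"
    using cE by (intro mult_right_mono) auto
  also have "\<dots> = kt * ((K*K) choose kt)" using absorb by (simp add: algebra_simps)
  also have "\<dots> = k t * card (subsets_RHA k t)" by (simp add: card_subsets_RHA K_def kt_def)
  finally show ?thesis unfolding eq1 K_def .
qed



definition cnt :: "(nat \<Rightarrow> nat) \<Rightarrow> nat \<Rightarrow> ((nat \<Rightarrow> (nat\<times>nat) set) \<Rightarrow> nat \<Rightarrow> bool) \<Rightarrow> nat \<Rightarrow> nat \<Rightarrow> nat" where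
  "cnt k n \<Phi> q r = (\<Sum>a\<in>PiE {1..n+q} (subsets_RHA k). \<Sum>c\<in>{1..k (n+q)}.
      of_bool (\<Phi> (restrict a {1..n}) (desc a n q c r)))"

definition base :: "(nat \<Rightarrow> nat) \<Rightarrow> nat \<Rightarrow> ((nat \<Rightarrow> (nat\<times>nat) set) \<Rightarrow> nat \<Rightarrow> bool) \<Rightarrow> nat" where
  "base k n \<Phi> = (\<Sum>a\<in>PiE {1..n} (subsets_RHA k). \<Sum>i\<in>{1..k n}. of_bool (\<Phi> a i))"

lemma inner_count:
  assumes pk: "perplexities k"
  shows "(\<Sum>y\<in>subsets_RHA k (Suc m). \<Sum>c\<in>{1..k (Suc m)}. of_bool (\<Psi> (pick b (lex_enum y ! (c-1)))) :: nat) * k m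
       \<le> k (Suc m) * card (subsets_RHA k (Suc m)) * (\<Sum>c'\<in>{1..k m}. of_bool (\<Psi> c'))"
proof -
  define Y where "Y = subsets_RHA k (Suc m)"
  define Kt where "Kt = {1..k (Suc m)}"
  define Km where "Km = {1..k m}"
  have e1: "(\<Sum>y\<in>Y. \<Sum>c\<in>Kt. of_bool (\<Psi> (pick b (lex_enum y ! (c-1)))) :: nat)
      = (\<Sum>y\<in>Y. \<Sum>c\<in>Kt. \<Sum>c'\<in>Km. of_bool (\<Psi> c') * of_bool (pick b (lex_enum y ! (c-1)) = c'))"
  proof (intro sum.cong refl)
    fix y c assume y: "y \<in> Y" and c: "c \<in> Kt"
    define p where "p = pick b (lex_enum y ! (c-1))"
    have pK: "p \<in> Km"
      using pick_range[of y k "Suc m" c b] y c unfolding Y_def Kt_def Km_def p_def by simp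
    have "(\<Sum>c'\<in>Km. of_bool (\<Psi> c') * of_bool (p = c') :: nat) = (\<Sum>c'\<in>Km. if p = c' then of_bool (\<Psi> c') else 0)"
      by (rule sum.cong) auto
    also have "\<dots> = of_bool (\<Psi> p)" using pK by (simp add: Km_def)
    finally show "(of_bool (\<Psi> (pick b (lex_enum y ! (c-1)))) :: nat)
        = (\<Sum>c'\<in>Km. of_bool (\<Psi> c') * of_bool (pick b (lex_enum y ! (c-1)) = c'))"
      unfolding p_def by simp
  qed
  also have "\<dots> = (\<Sum>c'\<in>Km. of_bool (\<Psi> c') * (\<Sum>y\<in>Y. \<Sum>c\<in>Kt. of_bool (pick b (lex_enum y ! (c-1)) = c')))"
    by (simp add: sum_distrib_left sum.swap[of _ Kt Km] sum.swap[of _ Y Km])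
  finally have e: "(\<Sum>y\<in>Y. \<Sum>c\<in>Kt. of_bool (\<Psi> (pick b (lex_enum y ! (c-1)))) :: nat) * k m
      = (\<Sum>c'\<in>Km. of_bool (\<Psi> c') * ((\<Sum>y\<in>Y. \<Sum>c\<in>Kt. of_bool (pick b (lex_enum y ! (c-1)) = c')) * k m))"
    by (simp add: sum_distrib_right mult.assoc)
  also have "\<dots> \<le> (\<Sum>c'\<in>Km. of_bool (\<Psi> c') * (k (Suc m) * card Y))"
  proof (rule sum_mono)
    fix c' assume "c' \<in> Km"
    have "(\<Sum>y\<in>Y. \<Sum>c\<in>Kt. of_bool (pick b (lex_enum y ! (c-1)) = c') :: nat) * k m \<le> k (Suc m) * card Y"
      using one_level[OF pk, of "Suc m" b c'] unfolding Y_def Kt_def by simp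
    then show "of_bool (\<Psi> c') * ((\<Sum>y\<in>Y. \<Sum>c\<in>Kt. of_bool (pick b (lex_enum y ! (c-1)) = c')) * k m)
        \<le> of_bool (\<Psi> c') * (k (Suc m) * card Y)" by (rule mult_left_mono) simp
  qed
  also have "\<dots> = k (Suc m) * card Y * (\<Sum>c'\<in>Km. of_bool (\<Psi> c'))"
    by (simp add: sum_distrib_left mult.commute)
  finally show ?thesis unfolding Y_def Kt_def Km_def .
qed

lemma cnt_bound:
  assumes pk: "perplexities k"
  shows "cnt k n \<Phi> q r * k n \<le> k (n+q) * (\<Prod>t\<in>{Suc n..n+q}. card (subsets_RHA k t)) * base k n \<Phi>"
proof (induction q arbitrary: r)
  case 0
  have "cnt k n \<Phi> 0 r = base k n \<Phi>"
    unfolding cnt_def base_def by (intro sum.cong refl) simp_all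
  then show ?case by simp
next
  case (Suc q)
  define top where "top = Suc (n+q)"
  define r' where "r' = r mod 2^q"
  define bb where "bb = (r < 2^q)"
  define \<Psi> where "\<Psi> g c' = \<Phi> (restrict g {1..n}) (desc g n q c' r')" for g c'
  have ins: "{1..n + Suc q} = insert top {1..n+q}" unfolding top_def by auto
  have ntop: "top \<notin> {1..n+q}" unfolding top_def by simp
  have "cnt k n \<Phi> (Suc q) r = (\<Sum>y\<in>subsets_RHA k top. \<Sum>g\<in>PiE {1..n+q} (subsets_RHA k).
        \<Sum>c\<in>{1..k top}. of_bool (\<Phi> (restrict (g(top:=y)) {1..n}) (desc (g(top:=y)) n (Suc q) c r)))"
    unfolding cnt_def ins sum_PiE_insert[OF ntop] by (simp add: top_def)
  also have "\<dots> = (\<Sum>y\<in>subsets_RHA k top. \<Sum>g\<in>PiE {1..n+q} (subsets_RHA k).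
        \<Sum>c\<in>{1..k top}. of_bool (\<Psi> g (pick bb (lex_enum y ! (c-1)))))"
  proof (intro sum.cong refl)
    fix y :: "(nat\<times>nat) set" and g :: "nat \<Rightarrow> (nat\<times>nat) set" and c :: nat
    have r1: "restrict (g(top:=y)) {1..n} = restrict g {1..n}"
      by (rule restrict_ext) (simp add: top_def)
    have r2: "desc (g(top:=y)) n q c' r' = desc g n q c' r'" for c'
      by (rule desc_local) (simp add: top_def)
    have "desc (g(top:=y)) n (Suc q) c r = desc (g(top:=y)) n q (pick bb (lex_enum y ! (c-1))) r'"
      by (simp add: top_def bb_def r'_def)
    then show "of_bool (\<Phi> (restrict (g(top:=y)) {1..n}) (desc (g(top:=y)) n (Suc q) c r)) =
        (of_bool (\<Psi> g (pick bb (lex_enum y ! (c-1)))) :: nat)"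
      unfolding \<Psi>_def r1 r2 by simp
  qed
  also have "\<dots> = (\<Sum>g\<in>PiE {1..n+q} (subsets_RHA k). \<Sum>y\<in>subsets_RHA k top.
        \<Sum>c\<in>{1..k top}. of_bool (\<Psi> g (pick bb (lex_enum y ! (c-1)))))"
    by (rule sum.swap)
  finally have e: "cnt k n \<Phi> (Suc q) r * k (n+q) = (\<Sum>g\<in>PiE {1..n+q} (subsets_RHA k). (\<Sum>y\<in>subsets_RHA k top.
        \<Sum>c\<in>{1..k top}. of_bool (\<Psi> g (pick bb (lex_enum y ! (c-1))))) * k (n+q))"
    by (simp add: sum_distrib_right)
  have "cnt k n \<Phi> (Suc q) r * k (n+q) \<le> (\<Sum>g\<in>PiE {1..n+q} (subsets_RHA k).
        k top * card (subsets_RHA k top) * (\<Sum>c'\<in>{1..k (n+q)}. of_bool (\<Psi> g c')))"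
    unfolding e
  proof (rule sum_mono)
    fix g :: "nat \<Rightarrow> (nat\<times>nat) set"
    show "(\<Sum>y\<in>subsets_RHA k top. \<Sum>c\<in>{1..k top}. of_bool (\<Psi> g (pick bb (lex_enum y ! (c-1))))) * k (n+q)
        \<le> k top * card (subsets_RHA k top) * (\<Sum>c'\<in>{1..k (n+q)}. of_bool (\<Psi> g c'))"
      using inner_count[OF pk, where m="n+q" and \<Psi>="\<Psi> g" and b=bb] unfolding top_def by simp
  qed
  also have "\<dots> = k top * card (subsets_RHA k top) * cnt k n \<Phi> q r'"
    unfolding cnt_def \<Psi>_def by (simp add: sum_distrib_left)
  finally have A1: "cnt k n \<Phi> (Suc q) r * k (n+q) \<le> k top * card (subsets_RHA k top) * cnt k n \<Phi> q r'" .
  have "cnt k n \<Phi> (Suc q) r * k n * k (n+q) \<le> k top * card (subsets_RHA k top) * cnt k n \<Phi> q r' * k n"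
    using mult_right_mono[OF A1, of "k n"] by (simp add: algebra_simps)
  also have "\<dots> \<le> k top * card (subsets_RHA k top) * (k (n+q) * (\<Prod>t\<in>{Suc n..n+q}. card (subsets_RHA k t)) * base k n \<Phi>)"
    using Suc.IH[of r'] by (simp add: mult.assoc)
  finally have A2: "cnt k n \<Phi> (Suc q) r * k n * k (n+q) \<le>
      (k top * card (subsets_RHA k top) * (\<Prod>t\<in>{Suc n..n+q}. card (subsets_RHA k t)) * base k n \<Phi>) * k (n+q)"
    by (simp add: algebra_simps)
  have kpos: "k (n+q) > 0" using perp_pos[OF pk] .
  have A3: "cnt k n \<Phi> (Suc q) r * k n \<le>
      k top * card (subsets_RHA k top) * (\<Prod>t\<in>{Suc n..n+q}. card (subsets_RHA k t)) * base k n \<Phi>"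
    using A2 kpos by simp
  have pr: "(\<Prod>t\<in>{Suc n..n + Suc q}. card (subsets_RHA k t)) = card (subsets_RHA k top) * (\<Prod>t\<in>{Suc n..n+q}. card (subsets_RHA k t))"
  proof -
    have "{Suc n..n + Suc q} = insert top {Suc n..n+q}" unfolding top_def by auto
    moreover have "top \<notin> {Suc n..n+q}" unfolding top_def by simp
    ultimately show ?thesis by simp
  qed
  show ?case using A3 unfolding pr by (simp add: top_def algebra_simps)
qed



definition Fn :: "nat \<Rightarrow> nat \<Rightarrow> nat \<Rightarrow> (nat \<Rightarrow> (nat\<times>nat) set) \<times> nat \<Rightarrow> nat list" where
  "Fn n p r0 ac = Ystr (fst ac) n (desc (fst ac) n p (snd ac) r0)"

definition UU :: "(nat \<Rightarrow> nat) \<Rightarrow> nat \<Rightarrow> ((nat \<Rightarrow> (nat\<times>nat) set) \<times> nat) set" where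
  "UU k m = PiE {1..m} (subsets_RHA k) \<times> {1..k m}"

lemma finite_UU: "finite (UU k m)"
  unfolding UU_def by (intro finite_cartesian_product finite_PiE) (auto simp: subsets_RHA_fin)

lemma card_filter_prod:
  assumes "finite A" "finite B"
  shows "card {ac \<in> A \<times> B. P ac} = (\<Sum>a\<in>A. \<Sum>c\<in>B. of_bool (P (a, c)))"
proof -
  have "card {ac \<in> A \<times> B. P ac} = (\<Sum>ac\<in>A \<times> B. of_bool (P ac))"
    using assms by (simp add: sum_of_bool_eq Int_def)
  also have "\<dots> = (\<Sum>a\<in>A. \<Sum>c\<in>B. of_bool (P (a, c)))"
    by (simp add: sum.cartesian_product)
  finally show ?thesis .
qed

lemma card_PiE_split:
  "card (PiE {1..n+p} (subsets_RHA k)) = card (PiE {1..n} (subsets_RHA k)) * (\<Prod>t\<in>{Suc n..n+p}. card (subsets_RHA k t))"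
proof -
  have u: "{1..n+p} = {1..n} \<union> {Suc n..n+p}" by auto
  have "(\<Prod>t\<in>{1..n+p}. card (subsets_RHA k t)) = (\<Prod>t\<in>{1..n}. card (subsets_RHA k t)) * (\<Prod>t\<in>{Suc n..n+p}. card (subsets_RHA k t))"
    unfolding u by (rule prod.union_disjoint) auto
  then show ?thesis by (simp add: card_PiE)
qed

lemma fiber_bound:
  assumes pk: "perplexities k"
  shows "card {ac \<in> UU k (n+p). Fn n p r0 ac = x} * k n \<le> card (UU k (n+p))"
proof -
  define \<Phi> where "\<Phi> b i = (Ystr b n i = x)" for b i
  have fP: "finite (PiE {1..n+p} (subsets_RHA k))" by (intro finite_PiE) (auto simp: subsets_RHA_fin)
  have "card {ac \<in> UU k (n+p). Fn n p r0 ac = x}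
     = (\<Sum>a\<in>PiE {1..n+p} (subsets_RHA k). \<Sum>c\<in>{1..k (n+p)}. of_bool (Fn n p r0 (a, c) = x))"
    unfolding UU_def by (rule card_filter_prod[OF fP]) simp
  also have "\<dots> = cnt k n \<Phi> p r0"
    unfolding cnt_def
  proof (intro sum.cong refl)
    fix a c
    have "Ystr a n i = Ystr (restrict a {1..n}) n i" for i by (rule Ystr_local) simp
    then show "of_bool (Fn n p r0 (a, c) = x) = (of_bool (\<Phi> (restrict a {1..n}) (desc a n p c r0)) :: nat)"
      unfolding Fn_def \<Phi>_def by simp
  qed
  finally have e: "card {ac \<in> UU k (n+p). Fn n p r0 ac = x} = cnt k n \<Phi> p r0" .
  have b: "base k n \<Phi> \<le> card (PiE {1..n} (subsets_RHA k))"
  proof -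
    have "base k n \<Phi> \<le> (\<Sum>a\<in>PiE {1..n} (subsets_RHA k). 1)"
      unfolding base_def
    proof (rule sum_mono)
      fix a assume a: "a \<in> PiE {1..n} (subsets_RHA k)"
      have inj: "inj_on (Ystr a n) {1..k n}" by (rule Ystr_inj) (use a in auto)
      have "(\<Sum>i\<in>{1..k n}. of_bool (\<Phi> a i) :: nat) = card {i\<in>{1..k n}. Ystr a n i = x}"
        by (simp add: \<Phi>_def sum_of_bool_eq Int_def)
      also have "\<dots> \<le> Suc 0"
        by (subst card_le_Suc0_iff_eq) (use inj in \<open>auto dest: inj_onD\<close>)
      finally show "(\<Sum>i\<in>{1..k n}. of_bool (\<Phi> a i) :: nat) \<le> 1" by simp
    qed
    then show ?thesis by simp
  qed
  have "card {ac \<in> UU k (n+p). Fn n p r0 ac = x} * k n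
      \<le> k (n+p) * (\<Prod>t\<in>{Suc n..n+p}. card (subsets_RHA k t)) * base k n \<Phi>"
    unfolding e by (rule cnt_bound[OF pk])
  also have "\<dots> \<le> k (n+p) * (\<Prod>t\<in>{Suc n..n+p}. card (subsets_RHA k t)) * card (PiE {1..n} (subsets_RHA k))"
    using b by (intro mult_left_mono) auto
  also have "\<dots> = card (UU k (n+p))"
    unfolding UU_def card_cartesian_product card_PiE_split by simp
  finally show ?thesis .
qed

lemma image_bound:
  assumes pk: "perplexities k" and ln: "l \<le> n"
  shows "card (Fn n p r0 ` UU k (n+p)) \<le> card (PiE {1..l} (subsets_RHA k)) * k l ^ 2^(n-l)"
proof -
  define N where "N = (2::nat)^(n-l)"
  define G where "G bv = concat (map (\<lambda>r. Ystr (fst bv) l (snd bv r)) [0..<N])"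
    for bv :: "(nat \<Rightarrow> (nat\<times>nat) set) \<times> (nat \<Rightarrow> nat)"
  define X where "X = PiE {1..l} (subsets_RHA k) \<times> PiE {0..<N} (\<lambda>_. {1..k l})"
  have sub: "Fn n p r0 ` UU k (n+p) \<subseteq> G ` X"
  proof
    fix y assume "y \<in> Fn n p r0 ` UU k (n+p)"
    then obtain a c where ac: "a \<in> PiE {1..n+p} (subsets_RHA k)" "c \<in> {1..k (n+p)}"
      and y: "y = Fn n p r0 (a, c)" unfolding UU_def by auto
    define i where "i = desc a n p c r0"
    have i: "i \<in> {1..k n}" unfolding i_def by (rule desc_range) (use ac in auto)
    have nl: "l + (n - l) = n" using ln by simp
    define v where "v = restrict (\<lambda>r. desc a l (n-l) i r) {0..<N}"
    have vX: "v \<in> PiE {0..<N} (\<lambda>_. {1..k l})"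
      unfolding v_def
    proof (rule restrict_PiE_iff[THEN iffD2], intro ballI)
      fix r assume "r \<in> {0..<N}"
      show "desc a l (n-l) i r \<in> {1..k l}"
        by (rule desc_range) (use ac i nl in auto)
    qed
    have bX: "restrict a {1..l} \<in> PiE {1..l} (subsets_RHA k)"
      using ac ln by (auto simp: restrict_PiE_iff)
    have "y = Ystr a n i" unfolding y Fn_def i_def by simp
    also have "\<dots> = concat (map (\<lambda>r. Ystr a l (desc a l (n-l) i r)) [0..<N])"
      unfolding N_def by (rule Ystr_chunks[OF ln])
    also have "\<dots> = G (restrict a {1..l}, v)"
    proof -
      have yl: "Ystr (restrict a {1..l}) l j = Ystr a l j" for j by (rule Ystr_local) simp
      have "G (restrict a {1..l}, v) = concat (map (\<lambda>r. Ystr a l (v r)) [0..<N])"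
        by (simp only: G_def fst_conv snd_conv yl)
      also have "\<dots> = concat (map (\<lambda>r. Ystr a l (desc a l (n-l) i r)) [0..<N])"
        by (intro arg_cong[where f=concat] map_cong refl) (simp add: v_def)
      finally show ?thesis by simp
    qed
    finally show "y \<in> G ` X" using vX bX unfolding X_def by blast
  qed
  have fX: "finite X" unfolding X_def
    by (intro finite_cartesian_product finite_PiE) (auto simp: subsets_RHA_fin)
  have "card (Fn n p r0 ` UU k (n+p)) \<le> card (G ` X)"
    by (rule card_mono[OF finite_imageI[OF fX] sub])
  also have "\<dots> \<le> card X" by (rule card_image_le[OF fX])
  also have "\<dots> = card (PiE {1..l} (subsets_RHA k)) * k l ^ N"
    unfolding X_def card_cartesian_product by (simp add: card_PiE)
  finally show ?thesis unfolding N_def .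
qed



lemma entropy_uniform:
  fixes g :: "'a \<Rightarrow> 'c" and F :: "'c \<Rightarrow> 'b" and X :: "'a \<Rightarrow> 'b"
  assumes ps: "prob_space M" and fU: "finite U"
    and gU: "\<And>\<omega>. \<omega> \<in> space M \<Longrightarrow> g \<omega> \<in> U"
    and meas: "\<And>c. c \<in> U \<Longrightarrow> {\<omega> \<in> space M. g \<omega> = c} \<in> sets M"
    and pr: "\<And>c. c \<in> U \<Longrightarrow> measure M {\<omega> \<in> space M. g \<omega> = c} = 1 / card U"
    and X: "\<And>\<omega>. \<omega> \<in> space M \<Longrightarrow> X \<omega> = F (g \<omega>)"
  shows "entropy_nat M X = (\<Sum>c\<in>U. - ln (card {c'\<in>U. F c' = F c} / card U)) / card U"
proof -
  interpret prob_space M by (rule ps)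
  define \<phi> where "\<phi> c = - ln (card {c'\<in>U. F c' = F c} / card U)" for c
  define E where "E c = {\<omega> \<in> space M. g \<omega> = c}" for c
  have m1: "measure M {\<omega>' \<in> space M. X \<omega>' = X \<omega>} = card {c'\<in>U. F c' = F (g \<omega>)} / card U"
    if \<omega>: "\<omega> \<in> space M" for \<omega>
  proof -
    define W where "W = {c'\<in>U. F c' = F (g \<omega>)}"
    have "{\<omega>' \<in> space M. X \<omega>' = X \<omega>} = (\<Union>c\<in>W. E c)"
      unfolding W_def E_def using X gU \<omega> by auto
    moreover have "measure M (\<Union>c\<in>W. E c) = (\<Sum>c\<in>W. measure M (E c))"
      by (rule finite_measure_finite_Union) (use fU meas in \<open>auto simp: W_def E_def disjoint_family_on_def\<close>)
    moreover have "(\<Sum>c\<in>W. measure M (E c)) = card W / card U"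
      using pr unfolding W_def E_def by simp
    ultimately show ?thesis unfolding W_def by simp
  qed
  have "entropy_nat M X = (\<integral>\<omega>. (\<Sum>c\<in>U. \<phi> c * indicator (E c) \<omega>) \<partial>M)"
    unfolding entropy_nat_def
  proof (rule Bochner_Integration.integral_cong[OF refl])
    fix \<omega> assume \<omega>: "\<omega> \<in> space M"
    have "(\<Sum>c\<in>U. \<phi> c * indicator (E c) \<omega>) = (\<Sum>c\<in>U. if c = g \<omega> then \<phi> c else 0)"
      by (rule sum.cong) (auto simp: E_def \<omega> indicator_def)
    also have "\<dots> = \<phi> (g \<omega>)" using gU[OF \<omega>] fU by simp
    finally show "- ln (measure M {\<omega>' \<in> space M. X \<omega>' = X \<omega>}) = (\<Sum>c\<in>U. \<phi> c * indicator (E c) \<omega>)"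
      unfolding \<phi>_def m1[OF \<omega>] by simp
  qed
  also have "\<dots> = (\<Sum>c\<in>U. \<integral>\<omega>. \<phi> c * indicator (E c) \<omega> \<partial>M)"
    by (rule Bochner_Integration.integral_sum) (use meas in \<open>auto simp: E_def less_top[symmetric] intro!: integrable_real_indicator\<close>)
  also have "\<dots> = (\<Sum>c\<in>U. \<phi> c * measure M (E c))"
  proof (rule sum.cong[OF refl])
    fix c assume c: "c \<in> U"
    have "E c \<inter> space M = E c" unfolding E_def by auto
    then show "(\<integral>\<omega>. \<phi> c * indicator (E c) \<omega> \<partial>M) = \<phi> c * measure M (E c)" by simp
  qed
  also have "\<dots> = (\<Sum>c\<in>U. \<phi> c) / card U"
    using pr by (simp add: E_def sum_divide_distrib)
  finally show ?thesis unfolding \<phi>_def .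
qed

lemma ent_lower:
  fixes F :: "'c \<Rightarrow> 'b"
  assumes fU: "finite U" and ne: "U \<noteq> {}" and K: "K > 0"
    and fib: "\<And>c. c \<in> U \<Longrightarrow> card {c'\<in>U. F c' = F c} * K \<le> card U"
  shows "ln (real K) \<le> (\<Sum>c\<in>U. - ln (card {c'\<in>U. F c' = F c} / card U)) / card U"
proof -
  have NP: "card U > 0" using fU ne by (simp add: card_gt_0_iff)
  have t: "ln (real K) \<le> - ln (card {c'\<in>U. F c' = F c} / card U)" if c: "c \<in> U" for c
  proof -
    define q where "q = card {c'\<in>U. F c' = F c}"
    have "c \<in> {c'\<in>U. F c' = F c}" using c by simp
    then have qp: "q > 0" unfolding q_def using fU by (auto simp: card_gt_0_iff)
    have "real q * real K \<le> real (card U)" using fib[OF c] unfolding q_def by (simp flip: of_nat_mult)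
    then have "real K \<le> real (card U) / real q" using qp by (simp add: field_simps)
    then have "ln (real K) \<le> ln (real (card U) / real q)" using K by simp
    also have "\<dots> = - ln (real q / real (card U))" using qp NP by (simp add: ln_div)
    finally show ?thesis unfolding q_def .
  qed
  have "(\<Sum>c\<in>U. ln (real K)) \<le> (\<Sum>c\<in>U. - ln (card {c'\<in>U. F c' = F c} / card U))"
    by (rule sum_mono) (rule t)
  then have "card U * ln (real K) \<le> (\<Sum>c\<in>U. - ln (card {c'\<in>U. F c' = F c} / card U))" by simp
  then show ?thesis using NP by (simp add: field_simps)
qed

lemma ent_upper:
  fixes F :: "'c \<Rightarrow> 'b"
  assumes fU: "finite U" and ne: "U \<noteq> {}" and B: "card (F ` U) \<le> B"
  shows "(\<Sum>c\<in>U. - ln (card {c'\<in>U. F c' = F c} / card U)) / card U \<le> ln (real B)"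
proof -
  define N where "N = real (card U)"
  define q where "q c = real (card {c'\<in>U. F c' = F c})" for c
  have NP: "N > 0" using fU ne unfolding N_def by (simp add: card_gt_0_iff)
  have qp: "q c > 0" if "c \<in> U" for c
  proof -
    have "c \<in> {c'\<in>U. F c' = F c}" using that by simp
    then show ?thesis unfolding q_def using fU by (auto simp: card_gt_0_iff)
  qed
  have Bp: "real B > 0"
  proof -
    have "card (F ` U) > 0" using fU ne by (simp add: card_gt_0_iff)
    then show ?thesis using B by simp
  qed
  have sq: "(\<Sum>c\<in>U. 1 / q c) = real (card (F ` U))"
  proof -
    have "(\<Sum>c\<in>U. 1 / q c) = (\<Sum>y\<in>F ` U. \<Sum>c\<in>{x. x \<in> U \<and> F x = y}. 1 / q c)"
      by (rule sum.image_gen[OF fU])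
    also have "\<dots> = (\<Sum>y\<in>F ` U. 1)"
    proof (rule sum.cong[OF refl])
      fix y assume "y \<in> F ` U"
      then obtain c0 where c0: "c0 \<in> U" "y = F c0" by auto
      have "(\<Sum>c\<in>{x. x \<in> U \<and> F x = y}. 1 / q c) = (\<Sum>c\<in>{x. x \<in> U \<and> F x = y}. 1 / q c0)"
        by (rule sum.cong) (auto simp: q_def c0)
      also have "\<dots> = 1" using qp[OF c0(1)] unfolding q_def c0 by simp
      finally show "(\<Sum>c\<in>{x. x \<in> U \<and> F x = y}. 1 / q c) = 1" .
    qed
    finally show ?thesis by simp
  qed
  have t: "- ln (q c / N) - ln (real B) \<le> N / (q c * real B) - 1" if c: "c \<in> U" for c
  proof -
    have pos: "N / (q c * real B) > 0" using NP qp[OF c] Bp by simp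
    have "- ln (q c / N) - ln (real B) = ln (N / (q c * real B))"
      using NP qp[OF c] Bp by (simp add: ln_div ln_mult)
    also have "\<dots> \<le> N / (q c * real B) - 1" by (rule ln_le_minus_one[OF pos])
    finally show ?thesis .
  qed
  have "(\<Sum>c\<in>U. - ln (q c / N) - ln (real B)) \<le> (\<Sum>c\<in>U. N / (q c * real B) - 1)"
    by (rule sum_mono) (rule t)
  also have "\<dots> = N / real B * (\<Sum>c\<in>U. 1 / q c) - N"
    by (simp add: sum_subtractf sum_distrib_left N_def mult.commute)
  also have "\<dots> = N / real B * real (card (F ` U)) - N" unfolding sq ..
  also have "\<dots> \<le> N / real B * real B - N"
    using B NP Bp by (intro diff_right_mono mult_left_mono) auto
  also have "\<dots> = 0" using Bp by simp
  finally have "(\<Sum>c\<in>U. - ln (q c / N)) \<le> N * ln (real B)"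
    by (simp add: sum_subtractf N_def)
  then show ?thesis using NP unfolding q_def N_def by (simp add: field_simps)
qed



lemma model_uniform:
  fixes M :: "'a measure" and S :: "nat \<Rightarrow> 'a \<Rightarrow> (nat \<times> nat) set" and C :: "nat \<Rightarrow> 'a \<Rightarrow> nat"
  assumes md: "RHA_model M k S C"
    and g_def: "g = (\<lambda>\<omega>. (restrict (\<lambda>t. S t \<omega>) {1..m}, C m \<omega>))"
  shows "\<And>\<omega>. \<omega> \<in> space M \<Longrightarrow> g \<omega> \<in> UU k m"
    and "\<And>c. c \<in> UU k m \<Longrightarrow> {\<omega> \<in> space M. g \<omega> = c} \<in> sets M"
    and "\<And>c. c \<in> UU k m \<Longrightarrow> measure M {\<omega> \<in> space M. g \<omega> = c} = 1 / card (UU k m)"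
proof -
  have ps: "prob_space M" using md by (simp add: RHA_model_def)
  interpret prob_space M by (rule ps)
  define Y where "Y = (\<lambda>i \<omega>. case i of Inl n \<Rightarrow> Inl (S n \<omega>) | Inr n \<Rightarrow> Inr (C n \<omega>))"
  define I0 :: "(nat + nat) set" where "I0 = Inl ` {1..} \<union> range Inr"
  have Sval: "\<And>t \<omega>. t \<ge> 1 \<Longrightarrow> \<omega> \<in> space M \<Longrightarrow> S t \<omega> \<in> subsets_RHA k t"
    using md by (simp add: RHA_model_def)
  have Sprob: "\<And>t A. t \<ge> 1 \<Longrightarrow> A \<in> subsets_RHA k t \<Longrightarrow> prob {\<omega> \<in> space M. S t \<omega> = A} = 1 / real (card (subsets_RHA k t))"
    using md by (simp add: RHA_model_def)
  have Cval: "\<And>n \<omega>. \<omega> \<in> space M \<Longrightarrow> C n \<omega> \<in> {1..k n}"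
    using md by (simp add: RHA_model_def)
  have Cprob: "\<And>n c. c \<in> {1..k n} \<Longrightarrow> prob {\<omega> \<in> space M. C n \<omega> = c} = 1 / real (k n)"
    using md unfolding RHA_model_def by blast
  have ind: "indep_vars (\<lambda>_. count_space UNIV) Y I0"
    using md unfolding RHA_model_def Y_def I0_def by blast
  define J :: "(nat + nat) set" where "J = Inl ` {1..m} \<union> {Inr m}"
  have JI: "J \<subseteq> I0" unfolding J_def I0_def by auto
  have indJ: "indep_vars (\<lambda>_. count_space UNIV) Y J" by (rule indep_vars_subset[OF ind JI])
  have rv: "Y i \<in> measurable M (count_space UNIV)" if "i \<in> J" for i
    using indJ that unfolding indep_vars_def by auto
  have fJ: "finite J" "J \<noteq> {}" unfolding J_def by auto
  show "g \<omega> \<in> UU k m" if "\<omega> \<in> space M" for \<omega>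
    unfolding g_def UU_def using Sval Cval that by (auto simp: restrict_PiE_iff)
  {
    fix c assume c: "c \<in> UU k m"
    obtain a cc where acc: "c = (a, cc)" by (cases c)
    have a: "a \<in> PiE {1..m} (subsets_RHA k)" and cc: "cc \<in> {1..k m}" using c acc unfolding UU_def by auto
    define A where "A i = (case i of Inl t \<Rightarrow> {Inl (a t)} | Inr _ \<Rightarrow> {Inr cc})" for i :: "nat + nat"
    have seteq: "{\<omega> \<in> space M. g \<omega> = c} = (\<Inter>i\<in>J. Y i -` A i \<inter> space M)"
    proof (intro equalityI subsetI)
      fix \<omega> assume "\<omega> \<in> {\<omega> \<in> space M. g \<omega> = c}"
      then have \<omega>: "\<omega> \<in> space M" "restrict (\<lambda>t. S t \<omega>) {1..m} = a" "C m \<omega> = cc"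
        unfolding g_def acc by auto
      have "S t \<omega> = a t" if "t \<in> {1..m}" for t using \<omega>(2) that by (metis restrict_apply')
      then show "\<omega> \<in> (\<Inter>i\<in>J. Y i -` A i \<inter> space M)"
        using \<omega> unfolding J_def Y_def A_def by auto
    next
      fix \<omega> assume w: "\<omega> \<in> (\<Inter>i\<in>J. Y i -` A i \<inter> space M)"
      then have \<omega>: "\<omega> \<in> space M" using fJ by auto
      have st: "S t \<omega> = a t" if "t \<in> {1..m}" for t
        using w that unfolding J_def Y_def A_def by auto
      have cm: "C m \<omega> = cc" using w unfolding J_def Y_def A_def by auto
      have "restrict (\<lambda>t. S t \<omega>) {1..m} = a"
      proof (rule ext)
        fix t show "restrict (\<lambda>t. S t \<omega>) {1..m} t = a t"
          using st a by (cases "t \<in> {1..m}") (auto simp: PiE_def extensional_def)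
      qed
      then show "\<omega> \<in> {\<omega> \<in> space M. g \<omega> = c}" using \<omega> cm unfolding g_def acc by simp
    qed
    have msets: "Y i -` A i \<inter> space M \<in> sets M" if "i \<in> J" for i
      using measurable_sets[OF rv[OF that], of "A i"] by simp
    show "{\<omega> \<in> space M. g \<omega> = c} \<in> sets M"
      unfolding seteq by (rule sets.finite_INT) (use fJ msets in auto)
    have "prob {\<omega> \<in> space M. g \<omega> = c} = (\<Prod>i\<in>J. prob (Y i -` A i \<inter> space M))"
      unfolding seteq by (rule indep_varsD_finite[OF indJ fJ(2) fJ(1)]) simp
    also have "\<dots> = (\<Prod>i\<in>Inl ` {1..m}. prob (Y i -` A i \<inter> space M)) * prob (Y (Inr m) -` A (Inr m) \<inter> space M)"
      unfolding J_def by (subst prod.union_disjoint) auto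
    also have "(\<Prod>i\<in>Inl ` {1..m}. prob (Y i -` A i \<inter> space M)) = (\<Prod>t\<in>{1..m}. prob (Y (Inl t) -` A (Inl t) \<inter> space M))"
      by (subst prod.reindex) (auto simp: inj_on_def)
    also have "\<dots> = (\<Prod>t\<in>{1..m}. 1 / real (card (subsets_RHA k t)))"
    proof (rule prod.cong[OF refl])
      fix t assume t: "t \<in> {1..m}"
      have "Y (Inl t) -` A (Inl t) \<inter> space M = {\<omega> \<in> space M. S t \<omega> = a t}"
        unfolding Y_def A_def by auto
      moreover have "a t \<in> subsets_RHA k t" using a t by auto
      ultimately show "prob (Y (Inl t) -` A (Inl t) \<inter> space M) = 1 / real (card (subsets_RHA k t))"
        using Sprob t by simp
    qed
    also have "prob (Y (Inr m) -` A (Inr m) \<inter> space M) = 1 / real (k m)"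
    proof -
      have "Y (Inr m) -` A (Inr m) \<inter> space M = {\<omega> \<in> space M. C m \<omega> = cc}"
        unfolding Y_def A_def by auto
      then show ?thesis using Cprob[OF cc] by simp
    qed
    also have "(\<Prod>t\<in>{1..m}. 1 / real (card (subsets_RHA k t))) * (1 / real (k m)) = 1 / real (card (UU k m))"
      unfolding UU_def card_cartesian_product by (simp add: card_PiE prod_dividef)
    finally show "measure M {\<omega> \<in> space M. g \<omega> = c} = 1 / card (UU k m)" .
  }
qed



lemma card_UU_pos: "perplexities k \<Longrightarrow> card (UU k m) > 0"
  unfolding UU_def card_cartesian_product
  by (simp add: card_PiE card_subsets_pos perp_pos)

lemma card_PiE_pos: "perplexities k \<Longrightarrow> card (PiE {1..l} (subsets_RHA k)) > 0"
  by (simp add: card_PiE card_subsets_pos)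

lemma entropy_block:
  assumes pk: "perplexities k" and md: "RHA_model M k S C"
    and p: "2^p \<le> j" "j < 2^(Suc p)"
  shows "entropy_nat M (\<lambda>\<omega>. RHA_block (\<lambda>m. S m \<omega>) (\<lambda>m. C m \<omega>) n j)
       = (\<Sum>c\<in>UU k (n+p). - ln (card {c'\<in>UU k (n+p). Fn n p (j - 2^p) c' = Fn n p (j - 2^p) c} / card (UU k (n+p)))) / card (UU k (n+p))"
proof -
  define g where "g = (\<lambda>\<omega>. (restrict (\<lambda>t. S t \<omega>) {1..n+p}, C (n+p) \<omega>))"
  note mu = model_uniform[OF md g_def]
  have ps: "prob_space M" using md by (simp add: RHA_model_def)
  show ?thesis
  proof (rule entropy_uniform[OF ps finite_UU mu])
    fix \<omega> assume "\<omega> \<in> space M"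
    define s where "s = (\<lambda>m. S m \<omega>)"
    have "RHA_block s (\<lambda>m. C m \<omega>) n j = Ystr s n (desc s n p (C (n+p) \<omega>) (j - 2^p))"
      using RHA_block_eq[OF p] by simp
    also have "\<dots> = Ystr (restrict s {1..n+p}) n (desc (restrict s {1..n+p}) n p (C (n+p) \<omega>) (j - 2^p))"
    proof -
      have "desc s n p i r = desc (restrict s {1..n+p}) n p i r" for i r by (rule desc_local) simp
      moreover have "Ystr s n i = Ystr (restrict s {1..n+p}) n i" for i by (rule Ystr_local) simp
      ultimately show ?thesis by simp
    qed
    also have "\<dots> = Fn n p (j - 2^p) (g \<omega>)" unfolding Fn_def g_def s_def by simp
    finally show "RHA_block (\<lambda>m. S m \<omega>) (\<lambda>m. C m \<omega>) n j = Fn n p (j - 2^p) (g \<omega>)"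
      unfolding s_def .
  qed
qed

lemma entropy_lower:
  assumes pk: "perplexities k" and md: "RHA_model M k S C"
    and p: "2^p \<le> j" "j < 2^(Suc p)"
  shows "ln (real (k n)) \<le> entropy_nat M (\<lambda>\<omega>. RHA_block (\<lambda>m. S m \<omega>) (\<lambda>m. C m \<omega>) n j)"
  unfolding entropy_block[OF pk md p]
proof (rule ent_lower[OF finite_UU])
  show "UU k (n+p) \<noteq> {}" using card_UU_pos[OF pk, of "n+p"] by auto
  show "k n > 0" by (rule perp_pos[OF pk])
  fix c show "card {c'\<in>UU k (n+p). Fn n p (j - 2^p) c' = Fn n p (j - 2^p) c} * k n \<le> card (UU k (n+p))"
    by (rule fiber_bound[OF pk])
qed

lemma entropy_upper:
  assumes pk: "perplexities k" and md: "RHA_model M k S C"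
    and p: "2^p \<le> j" "j < 2^(Suc p)" and ln: "l \<le> n"
  shows "entropy_nat M (\<lambda>\<omega>. RHA_block (\<lambda>m. S m \<omega>) (\<lambda>m. C m \<omega>) n j)
     \<le> ln (real (card (PiE {1..l} (subsets_RHA k)))) + 2^(n-l) * ln (real (k l))"
proof -
  have "entropy_nat M (\<lambda>\<omega>. RHA_block (\<lambda>m. S m \<omega>) (\<lambda>m. C m \<omega>) n j)
      \<le> ln (real (card (PiE {1..l} (subsets_RHA k)) * k l ^ 2^(n-l)))"
    unfolding entropy_block[OF pk md p]
  proof (rule ent_upper[OF finite_UU])
    show "UU k (n+p) \<noteq> {}" using card_UU_pos[OF pk, of "n+p"] by auto
    show "card (Fn n p (j - 2^p) ` UU k (n+p)) \<le> card (PiE {1..l} (subsets_RHA k)) * k l ^ 2^(n-l)"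
      by (rule image_bound[OF pk ln])
  qed
  also have "\<dots> = ln (real (card (PiE {1..l} (subsets_RHA k)))) + 2^(n-l) * ln (real (k l))"
    using card_PiE_pos[OF pk, of l] perp_pos[OF pk, of l] by (simp add: ln_mult ln_realpow)
  finally show ?thesis .
qed

theorem proposition9:
  fixes M :: "'a measure" and k :: "nat \<Rightarrow> nat"
    and S :: "nat \<Rightarrow> 'a \<Rightarrow> (nat \<times> nat) set" and C :: "nat \<Rightarrow> 'a \<Rightarrow> nat" and j :: nat
  assumes "perplexities k"
    and "RHA_model M k S C"
    and "j \<ge> 1"
  shows "(INF n. entropy_nat M (\<lambda>\<omega>. RHA_block (\<lambda>m. S m \<omega>) (\<lambda>m. C m \<omega>) n j) / 2 ^ n)
           = (INF l. ln (real (k l)) / 2 ^ l)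
       \<and> (\<lambda>l. ln (real (k l)) / 2 ^ l) \<longlonglongrightarrow> (INF l. ln (real (k l)) / 2 ^ l)"
proof -
  note pk = assms(1) and md = assms(2)
  obtain p where p: "2^p \<le> j" "j < 2^(Suc p)"
    using ex_power_ivl1[of 2 j] assms(3) by auto
  define a where "a l = ln (real (k l)) / 2 ^ l" for l
  define Hn where "Hn n = entropy_nat M (\<lambda>\<omega>. RHA_block (\<lambda>m. S m \<omega>) (\<lambda>m. C m \<omega>) n j) / 2 ^ n" for n
  have a0: "a l \<ge> 0" for l
  proof -
    have "real (k l) \<ge> 1" using perp_pos[OF pk, of l] by simp
    then show ?thesis unfolding a_def by simp
  qed
  have bdda: "bdd_below (range a)" using a0 by (intro bdd_belowI[of _ 0]) auto
  have dec: "decseq a"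
  proof (rule decseq_SucI)
    fix l
    have kp: "real (k l) > 0" using perp_pos[OF pk, of l] by simp
    have "k (Suc l) \<le> k l ^ 2" using perp_le[OF pk, of "Suc l"] by simp
    then have h1: "real (k (Suc l)) \<le> real (k l) ^ 2" by (metis of_nat_le_iff of_nat_power)
    have h2: "real (k (Suc l)) > 0" using perp_pos[OF pk, of "Suc l"] by simp
    have "ln (real (k (Suc l))) \<le> ln (real (k l) ^ 2)"
      using h1 h2 kp by (subst ln_le_cancel_iff) auto
    also have "\<dots> = 2 * ln (real (k l))" using kp by (simp add: ln_realpow)
    finally show "a (Suc l) \<le> a l" unfolding a_def by (simp add: field_simps)
  qed
  have lim: "a \<longlonglongrightarrow> (INF l. a l)" by (rule LIMSEQ_decseq_INF[OF bdda dec])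
  have lowH: "a n \<le> Hn n" for n
    unfolding a_def Hn_def using entropy_lower[OF pk md p, of n] by (simp add: divide_right_mono)
  have bddH: "bdd_below (range Hn)" using lowH a0 by (intro bdd_belowI[of _ 0]) (auto intro: order_trans)
  have ge: "(INF l. a l) \<le> (INF n. Hn n)"
  proof (rule cINF_greatest)
    fix n show "(INF l. a l) \<le> Hn n" using cINF_lower[OF bdda, of n] lowH[of n] by simp
  qed simp
  have le_l: "(INF n. Hn n) \<le> a l" for l
  proof (rule field_le_epsilon)
    fix e :: real assume e: "0 < e"
    define P where "P = real (card (PiE {1..l} (subsets_RHA k)))"
    have P1: "P \<ge> 1" using card_PiE_pos[OF pk, of l] unfolding P_def by simp
    then have lP: "ln P \<ge> 0" by simp
    obtain N where N: "ln P / e < 2^N" using real_arch_pow[of 2 "ln P / e"] by auto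
    define n where "n = max N l"
    have ln: "l \<le> n" unfolding n_def by simp
    have "(2::real)^N \<le> 2^n" unfolding n_def by (intro power_increasing) auto
    with N have "ln P / e < 2^n" by linarith
    then have lt: "ln P / 2^n < e" using e by (simp add: field_simps)
    have "Hn n \<le> (ln P + 2^(n-l) * ln (real (k l))) / 2^n"
      unfolding Hn_def P_def using entropy_upper[OF pk md p ln] by (simp add: divide_right_mono)
    also have "\<dots> = ln P / 2^n + a l"
    proof -
      have "(2::real)^n = 2^(n-l) * 2^l" using ln by (simp flip: power_add)
      then show ?thesis unfolding a_def by (simp add: add_divide_distrib)
    qed
    also have "\<dots> \<le> e + a l" using lt by simp
    finally have "Hn n \<le> a l + e" by simp
    moreover have "(INF n. Hn n) \<le> Hn n" by (rule cINF_lower[OF bddH]) simp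
    ultimately show "(INF n. Hn n) \<le> a l + e" by simp
  qed
  have le: "(INF n. Hn n) \<le> (INF l. a l)"
    by (rule cINF_greatest) (use le_l in auto)
  have "(INF n. Hn n) = (INF l. a l)" using ge le by simp
  then show ?thesis using lim unfolding Hn_def a_def by simp
qed


end
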